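(* Let $\mathfrak{S}=(\mathcal{X},\mathsf{S},\gamma,(\Lambda_{a})_{a\in\mathcal{A}})$ be a spectral decomposition system for the Euclidean space $\mathfrak{H}$ and let $\Phi\colon\mathfrak{H}\to[-\infty,+\infty]$. Then the following are equivalent: (i) for all $X,Y\in\mathfrak{H}$, $\gamma(X)=\gamma(Y)$ implies $\Phi(X)=\Phi(Y)$; (ii) $\Phi\circ\Lambda_a=\Phi\circ\Lambda_b$ for all $a,b\in\mathcal{A}$; (iii) there exists an $\mathsf{S}$-invariant function $\varphi\colon\mathcal{X}\to[-\infty,+\infty]$ such that $\Phi=\varphi\circ\gamma$. Moreover, if (iii) holds, then $\varphi=\Phi\circ\Lambda_a$ for every $a\in\mathcal{A}$.
   Context: A Euclidean space is a finite-dimensional real inner product space; inner products are written $\langle\cdot,\cdot\rangle$ and norms $\|\cdot\|$. Let $\mathfrak{H}$ and $\mathcal{X}$ be Euclidean spaces, let $\mathsf{S}$ be a group acting on $\mathcal{X}$ by linear isometries, let $\gamma\colon\mathfrak{H}\to\mathcal{X}$, and let $(\Lambda_a)_{a\in\mathcal{A}}$ be a family of linear operators from $\mathcal{X}$ to $\mathfrak{H}$. The orbit of $x$ is $\mathsf{S}\cdot x=\{s\cdot x: s\in\mathsf{S}\}$; a map $f$ on $\mathcal{X}$ is $\mathsf{S}$-invariant if $f(s\cdot x)=f(x)$ for all $s,x$. The tuple is a spectral decomposition system for $\mathfrak{H}$ if: [A] every $\Lambda_a$ is an isometry; [B] there exists an $\mathsf{S}$-invariant $\tau\colon\mathcal{X}\to\mathcal{X}$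 with $\tau(x)\in\mathsf{S}\cdot x$ for all $x$ and $\gamma\circ\Lambda_a=\tau$ for all $a$; [C] for every $X\in\mathfrak{H}$ there is $a$ with $X=\Lambda_a\gamma(X)$; [D] $\langle X,Y\rangle\leq\langle\gamma(X),\gamma(Y)\rangle$ for all $X,Y\in\mathfrak{H}$. *)

theory Defs
  imports "HOL-Analysis.Analysis" "HOL-Algebra.Group" "HOL-Library.Extended_Real"
begin

definition isometric_group_action :: "('s, 'm) monoid_scheme \<Rightarrow> ('s \<Rightarrow> 'x::euclidean_space \<Rightarrow> 'x) \<Rightarrow> bool" where
  "isometric_group_action G act \<longleftrightarrow>
     group G \<and>
     act \<one>\<^bsub>G\<^esub> = id \<and>
     (\<forall>s\<in>carrier G. \<forall>t\<in>carrier G. act (s \<otimes>\<^bsub>G\<^esub> t) = act s \<circ> act t) \<and>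
     (\<forall>s\<in>carrier G. linear (act s) \<and> (\<forall>x. norm (act s x) = norm x))"

definition orbit :: "('s, 'm) monoid_scheme \<Rightarrow> ('s \<Rightarrow> 'x \<Rightarrow> 'x) \<Rightarrow> 'x \<Rightarrow> 'x set" where
  "orbit G act x = {act s x | s. s \<in> carrier G}"

definition S_invariant :: "('s, 'm) monoid_scheme \<Rightarrow> ('s \<Rightarrow> 'x \<Rightarrow> 'x) \<Rightarrow> ('x \<Rightarrow> 'b) \<Rightarrow> bool" where
  "S_invariant G act f \<longleftrightarrow> (\<forall>s\<in>carrier G. \<forall>x. f (act s x) = f x)"

definition linear_isometry :: "('x::euclidean_space \<Rightarrow> 'h::euclidean_space) \<Rightarrow> bool" where
  "linear_isometry L \<longleftrightarrow> linear L \<and> (\<forall>x. norm (L x) = norm x)"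

definition spectral_decomposition_system ::
  "('s, 'm) monoid_scheme \<Rightarrow> ('s \<Rightarrow> 'x::euclidean_space \<Rightarrow> 'x) \<Rightarrow> ('h::euclidean_space \<Rightarrow> 'x)
    \<Rightarrow> 'a set \<Rightarrow> ('a \<Rightarrow> 'x \<Rightarrow> 'h) \<Rightarrow> bool" where
  "spectral_decomposition_system G act \<gamma> A \<Lambda> \<longleftrightarrow>
     isometric_group_action G act \<and>
     (\<forall>a\<in>A. linear_isometry (\<Lambda> a)) \<and>
     (\<exists>\<tau>. S_invariant G act \<tau> \<and> (\<forall>x. \<tau> x \<in> orbit G act x) \<and> (\<forall>a\<in>A. \<gamma> \<circ> \<Lambda> a = \<tau>)) \<and>
     (\<forall>X. \<exists>a\<in>A. X = \<Lambda> a (\<gamma> X)) \<and>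
     (\<forall>X Y. inner X Y \<le> inner (\<gamma> X) (\<gamma> Y))"

end

theory Submission
  imports Defs
begin

theorem proposition4p1:
  fixes G :: "('s, 'm) monoid_scheme"
    and act :: "'s \<Rightarrow> 'x::euclidean_space \<Rightarrow> 'x"
    and \<gamma> :: "'h::euclidean_space \<Rightarrow> 'x"
    and A :: "'a set"
    and \<Lambda> :: "'a \<Rightarrow> 'x \<Rightarrow> 'h"
    and \<Phi> :: "'h \<Rightarrow> ereal"
  assumes "spectral_decomposition_system G act \<gamma> A \<Lambda>"
  shows "((\<forall>X Y. \<gamma> X = \<gamma> Y \<longrightarrow> \<Phi> X = \<Phi> Y) \<longleftrightarrow>
            (\<forall>a\<in>A. \<forall>b\<in>A. \<Phi> \<circ> \<Lambda> a = \<Phi> \<circ> \<Lambda> b))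
       \<and> ((\<forall>a\<in>A. \<forall>b\<in>A. \<Phi> \<circ> \<Lambda> a = \<Phi> \<circ> \<Lambda> b) \<longleftrightarrow>
            (\<exists>\<phi> :: 'x \<Rightarrow> ereal. S_invariant G act \<phi> \<and> \<Phi> = \<phi> \<circ> \<gamma>))
       \<and> (\<forall>\<phi> :: 'x \<Rightarrow> ereal. S_invariant G act \<phi> \<and> \<Phi> = \<phi> \<circ> \<gamma> \<longrightarrow>
            (\<forall>a\<in>A. \<phi> = \<Phi> \<circ> \<Lambda> a))"
proof -
  from assms obtain \<tau> where tS: "S_invariant G act \<tau>" and torb: "\<And>x. \<tau> x \<in> orbit G act x"
    and gL: "\<And>a x. a \<in> A \<Longrightarrow> \<gamma> (\<Lambda> a x) = \<tau> x"
    and C: "\<And>X. \<exists>a\<in>A. X = \<Lambda> a (\<gamma> X)"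
    unfolding spectral_decomposition_system_def by (metis comp_apply)
  have inv: "\<And>s x. s \<in> carrier G \<Longrightarrow> \<tau> (act s x) = \<tau> x" using tS unfolding S_invariant_def by blast
  have iii_i: "(\<exists>\<phi> :: 'x \<Rightarrow> ereal. S_invariant G act \<phi> \<and> \<Phi> = \<phi> \<circ> \<gamma>) \<Longrightarrow> (\<forall>X Y. \<gamma> X = \<gamma> Y \<longrightarrow> \<Phi> X = \<Phi> Y)"
    by auto
  have i_ii: "(\<forall>X Y. \<gamma> X = \<gamma> Y \<longrightarrow> \<Phi> X = \<Phi> Y) \<Longrightarrow> (\<forall>a\<in>A. \<forall>b\<in>A. \<Phi> \<circ> \<Lambda> a = \<Phi> \<circ> \<Lambda> b)"
    using gL by (auto simp: fun_eq_iff)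
  have ii_iii: "(\<exists>\<phi> :: 'x \<Rightarrow> ereal. S_invariant G act \<phi> \<and> \<Phi> = \<phi> \<circ> \<gamma>)"
    if H: "\<forall>a\<in>A. \<forall>b\<in>A. \<Phi> \<circ> \<Lambda> a = \<Phi> \<circ> \<Lambda> b"
  proof -
    obtain a0 where a0: "a0 \<in> A" using C by blast
    have H': "\<And>a b x. a \<in> A \<Longrightarrow> b \<in> A \<Longrightarrow> \<Phi> (\<Lambda> a x) = \<Phi> (\<Lambda> b x)"
      using H by (metis comp_apply)
    have key: "\<Phi> (\<Lambda> a x) = \<Phi> (\<Lambda> a0 (\<tau> x))" if "a \<in> A" for a x
    proof -
      obtain b where b: "b \<in> A" "\<Lambda> a x = \<Lambda> b (\<gamma> (\<Lambda> a x))" using C by blast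
      then have "\<Lambda> a x = \<Lambda> b (\<tau> x)" using gL that by simp
      then show ?thesis using H' b a0 by metis
    qed
    show ?thesis
    proof (intro exI conjI)
      show "S_invariant G act (\<Phi> \<circ> \<Lambda> a0)"
        unfolding S_invariant_def using key[OF a0] inv by (metis comp_apply)
      show "\<Phi> = (\<Phi> \<circ> \<Lambda> a0) \<circ> \<gamma>"
      proof
        fix X
        obtain a where a: "a \<in> A" "X = \<Lambda> a (\<gamma> X)" using C by blast
        then show "\<Phi> X = ((\<Phi> \<circ> \<Lambda> a0) \<circ> \<gamma>) X" using H' a0 by (metis comp_apply)
      qed
    qed
  qed
  have more: "\<forall>\<phi> :: 'x \<Rightarrow> ereal. S_invariant G act \<phi> \<and> \<Phi> = \<phi> \<circ> \<gamma> \<longrightarrow> (\<forall>a\<in>A. \<phi> = \<Phi> \<circ> \<Lambda> a)"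
  proof (intro allI impI ballI)
    fix \<phi> :: "'x \<Rightarrow> ereal" and a assume h: "S_invariant G act \<phi> \<and> \<Phi> = \<phi> \<circ> \<gamma>" and a: "a \<in> A"
    show "\<phi> = \<Phi> \<circ> \<Lambda> a"
    proof
      fix x
      obtain s where s: "s \<in> carrier G" "\<tau> x = act s x" using torb[of x] unfolding orbit_def by blast
      have "(\<Phi> \<circ> \<Lambda> a) x = \<phi> (\<tau> x)" using h gL[OF a] by simp
      also have "\<dots> = \<phi> x" using s h unfolding S_invariant_def by simp
      finally show "\<phi> x = (\<Phi> \<circ> \<Lambda> a) x" by simp
    qed
  qed
  show ?thesis using iii_i i_ii ii_iii more by blast
qed

end
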